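(* Let $M\ge 2$ and let $T$ be a positive even integer. For $k=0,1,\dots,T/2$ put $\omega_k=2\pi k/T$. Let $A_{ijk}\ge 0$ and $\phi_{ijk}\in\mathbb{R}$ be given for $1\le i,j\le M$, $0\le k\le T/2$. For $\boldsymbol{\tau}=(\tau_1,\dots,\tau_M)\in\mathbb{R}^M$ write $\tau_{ij}=\tau_j-\tau_i$, and define $$\mathcal{J}(\boldsymbol{\tau})=\frac{1}{T}\sum_{k=0}^{T/2}\sum_{i=1}^{M}\sum_{j=1}^{M}A_{ijk}\cos(\omega_k\tau_{ij}+\phi_{ijk}).$$ For auxiliary variables $\boldsymbol{\theta}=(\theta_{ijk})$ with $\theta_{ijk}\in[-\pi,\pi]$, define $$Q(\boldsymbol{\tau},\boldsymbol{\theta})=\frac{1}{T}\sum_{k=0}^{T/2}\sum_{i=1}^{M}\sum_{j=1}^{M}\Big\{-B_{ijk}\big(\omega_k\tau_{ij}+\phi_{ijk}+2\nu_{ijk}\pi\big)^2+A_{ijk}\big(\cos\theta_{ijk}+\tfrac12\theta_{ijk}\sin\theta_{ijk}\big)\Big\},\qquad B_{ijk}=\frac{A_{ijk}}{2}\frac{\sin\theta_{ijk}}{\theta_{ijk}},$$ where $\sin\theta/\theta$ is interpreted as $1$ at $\theta=0$, and where, for the given $\boldsymbol{\tau}$, $\nu_{ijk}\in\mathbb{Z}$ is chosen such that $|\omega_k\tau_{ij}+\phi_{ijk}+2\nu_{ijk}\pi|\le\pi$. Then $Q$ is an auxiliary function for $\mathcal{J}$: $\mathcal{J}(\boldsymbol{\tau})\ge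 Q(\boldsymbol{\tau},\boldsymbol{\theta})$ for every $\boldsymbol{\tau}\in\mathbb{R}^M$ and every such $\boldsymbol{\theta}$, and $Q(\boldsymbol{\tau},\boldsymbol{\theta})=\mathcal{J}(\boldsymbol{\tau})$ holds when $\theta_{ijk}=\omega_k\tau_{ij}+\phi_{ijk}+2\nu_{ijk}\pi$ for all $i,j,k$.
   Context: This arises in time-delay estimation: $\tau_i$ are time delays (relative to a reference sensor) at $M$ sensors, and in the paper $A_{ijk}=\beta_k a_{ik}a_{jk}|V_{ijk}|$, $\phi_{ijk}=\angle V_{ijk}$, where $V_{ijk}$ are entries of the Hermitian spatial covariance matrix of the observations at frequency $k$, $a_{ik}\ge 0$ are relative amplitudes, and $\beta_0=\beta_{T/2}=1$, $\beta_k=2$ otherwise; $\mathcal{J}$ is then (up to a positive constant factor for fixed amplitudes) the multichannel cross-correlation objective. Only $A_{ijk}\ge0$ is needed for the statement. *)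

theory Defs
  imports Complex_Main
begin

definition omega :: "nat \<Rightarrow> nat \<Rightarrow> real" where
  "omega T k = 2 * pi * real k / real T"

definition sinc :: "real \<Rightarrow> real" where
  "sinc \<theta> = (if \<theta> = 0 then 1 else sin \<theta> / \<theta>)"

definition Jobj :: "nat \<Rightarrow> nat \<Rightarrow> (nat \<Rightarrow> nat \<Rightarrow> nat \<Rightarrow> real) \<Rightarrow>
    (nat \<Rightarrow> nat \<Rightarrow> nat \<Rightarrow> real) \<Rightarrow> (nat \<Rightarrow> real) \<Rightarrow> real" where
  "Jobj M T A \<phi> \<tau> = (1 / real T) *
     (\<Sum>k\<in>{0..T div 2}. \<Sum>i\<in>{1..M}. \<Sum>j\<in>{1..M}.
        A i j k * cos (omega T k * (\<tau> j - \<tau> i) + \<phi> i j k))"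

definition Bcoef :: "real \<Rightarrow> real \<Rightarrow> real" where
  "Bcoef a \<theta> = a / 2 * sinc \<theta>"

definition Qaux :: "nat \<Rightarrow> nat \<Rightarrow> (nat \<Rightarrow> nat \<Rightarrow> nat \<Rightarrow> real) \<Rightarrow>
    (nat \<Rightarrow> nat \<Rightarrow> nat \<Rightarrow> real) \<Rightarrow> (nat \<Rightarrow> nat \<Rightarrow> nat \<Rightarrow> int) \<Rightarrow>
    (nat \<Rightarrow> real) \<Rightarrow> (nat \<Rightarrow> nat \<Rightarrow> nat \<Rightarrow> real) \<Rightarrow> real" where
  "Qaux M T A \<phi> \<nu> \<tau> \<theta> = (1 / real T) *
     (\<Sum>k\<in>{0..T div 2}. \<Sum>i\<in>{1..M}. \<Sum>j\<in>{1..M}.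
        - Bcoef (A i j k) (\<theta> i j k) *
            (omega T k * (\<tau> j - \<tau> i) + \<phi> i j k + 2 * real_of_int (\<nu> i j k) * pi)\<^sup>2
        + A i j k * (cos (\<theta> i j k) + 1/2 * \<theta> i j k * sin (\<theta> i j k)))"

end

theory Submission
  imports Defs
begin

lemma ycos_le_sin:
  fixes y :: real assumes "0 \<le> y" "y \<le> pi" shows "y * cos y \<le> sin y"
proof -
  have "(\<lambda>t. sin t - t * cos t) 0 \<le> (\<lambda>t. sin t - t * cos t) y"
  proof (rule DERIV_nonneg_imp_increasing_open[OF assms(1)])
    fix x :: real assume x: "0 < x" "x < y"
    have "((\<lambda>t. sin t - t * cos t) has_real_derivative (cos x - (1 * cos x + x * (- sin x)))) (at x)"
      by (intro derivative_eq_intros) auto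
    moreover have "cos x - (1 * cos x + x * (- sin x)) \<ge> 0"
      using x assms sin_ge_zero[of x] by simp
    ultimately show "\<exists>d. ((\<lambda>t. sin t - t * cos t) has_real_derivative d) (at x) \<and> d \<ge> 0" by blast
  next
    show "continuous_on {0..y} (\<lambda>t. sin t - t * cos t)"
      by (intro continuous_intros)
  qed
  then show ?thesis by simp
qed

lemma sinc_mono:
  fixes y z :: real assumes "0 < y" "y \<le> z" "z \<le> pi"
  shows "sin z / z \<le> sin y / y"
proof (rule DERIV_nonpos_imp_decreasing_open[OF assms(2), where f="\<lambda>t. sin t / t"])
  fix x :: real assume x: "y < x" "x < z"
  have "((\<lambda>t. sin t / t) has_real_derivative ((cos x * x - sin x * 1) / (x * x))) (at x)"
    using x assms by (intro derivative_eq_intros) auto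
  moreover have "(cos x * x - sin x * 1) / (x * x) \<le> 0"
    using ycos_le_sin[of x] x assms by (intro divide_nonpos_nonneg) (auto simp: mult.commute)
  ultimately show "\<exists>d. ((\<lambda>t. sin t / t) has_real_derivative d) (at x) \<and> d \<le> 0" by blast
next
  show "continuous_on {y..z} (\<lambda>t. sin t / t)"
    using assms by (intro continuous_intros) auto
qed

lemma key_pos:
  fixes x b :: real assumes "0 \<le> x" "x \<le> pi" "0 \<le> b" "b \<le> pi"
  shows "cos b + sinc b / 2 * b\<^sup>2 \<le> cos x + sinc b / 2 * x\<^sup>2"
proof -
  define s where "s = sinc b"
  define h where "h = (\<lambda>t. cos t + s / 2 * t\<^sup>2)"
  have hd: "(h has_real_derivative (s * t - sin t)) (at t)" for t
    unfolding h_def by (auto intro!: derivative_eq_intros simp: power2_eq_square)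
  have hc: "continuous_on S h" for S unfolding h_def by (intro continuous_intros)
  show ?thesis
  proof (cases "x \<le> b")
    case True
    have "h b \<le> h x"
    proof (rule DERIV_nonpos_imp_decreasing_open[OF True])
      fix t assume t: "x < t" "t < b"
      have "sin b / b \<le> sin t / t" using sinc_mono[of t b] t assms by simp
      moreover have "b \<noteq> 0" "t > 0" using t assms by auto
      ultimately have "sin b / b * t \<le> sin t / t * t" by (intro mult_right_mono) auto
      hence "s * t \<le> sin t" using \<open>t > 0\<close> \<open>b \<noteq> 0\<close> by (simp add: s_def sinc_def)
      thus "\<exists>d. (h has_real_derivative d) (at t) \<and> d \<le> 0" using hd by force
    qed (rule hc)
    thus ?thesis by (simp add: h_def s_def)
  next
    case False
    have "h b \<le> h x"
    proof (rule DERIV_nonneg_imp_increasing_open[of b x h])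
      show "b \<le> x" using False by simp
      fix t assume t: "b < t" "t < x"
      have "sin t \<le> s * t"
      proof (cases "b = 0")
        case True thus ?thesis using sin_x_le_x[of t] t by (simp add: s_def sinc_def)
      next
        case False
        have "sin t / t \<le> sin b / b" using sinc_mono[of b t] t assms False by simp
        moreover have "t > 0" using t assms by auto
        ultimately have "sin t / t * t \<le> sin b / b * t" by (intro mult_right_mono) auto
        thus ?thesis using \<open>t > 0\<close> False by (simp add: s_def sinc_def)
      qed
      thus "\<exists>d. (h has_real_derivative d) (at t) \<and> d \<ge> 0" using hd by force
    qed (rule hc)
    thus ?thesis by (simp add: h_def s_def)
  qed
qed

lemma sinc_even: "sinc (- t) = sinc t"
  by (simp add: sinc_def)

lemma key:
  fixes x b :: real assumes "\<bar>x\<bar> \<le> pi" "\<bar>b\<bar> \<le> pi"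
  shows "cos b + sinc b / 2 * b\<^sup>2 \<le> cos x + sinc b / 2 * x\<^sup>2"
proof -
  have "cos \<bar>b\<bar> + sinc \<bar>b\<bar> / 2 * \<bar>b\<bar>\<^sup>2 \<le> cos \<bar>x\<bar> + sinc \<bar>b\<bar> / 2 * \<bar>x\<bar>\<^sup>2"
    using key_pos[of "\<bar>x\<bar>" "\<bar>b\<bar>"] assms by simp
  moreover have "sinc \<bar>b\<bar> = sinc b" by (cases "b \<ge> 0") (auto simp: sinc_even)
  moreover have "cos \<bar>b\<bar> = cos b" "cos \<bar>x\<bar> = cos x" by (auto simp: abs_if)
  ultimately show ?thesis by simp
qed

lemma theta_sin: "t * sin t = sinc t * t\<^sup>2"
  by (simp add: sinc_def power2_eq_square)

lemma term_le:
  fixes a x y b :: real and n :: int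
  assumes "a \<ge> 0" "\<bar>x\<bar> \<le> pi" "\<bar>b\<bar> \<le> pi" "x = y + 2 * real_of_int n * pi"
  shows "- Bcoef a b * x\<^sup>2 + a * (cos b + 1/2 * b * sin b) \<le> a * cos y"
proof -
  have cy: "cos x = cos y"
    using assms(4) cos_int_2pin[of n] sin_int_2pin[of n] by (simp add: cos_add mult.commute mult.left_commute)
  have "cos b + 1/2 * b * sin b - sinc b / 2 * x\<^sup>2 \<le> cos x"
    using key[OF assms(2,3)] theta_sin[of b] by simp
  hence "a * (cos b + 1/2 * b * sin b - sinc b / 2 * x\<^sup>2) \<le> a * cos x"
    using assms(1) by (simp add: mult_left_mono)
  thus ?thesis using cy by (simp add: Bcoef_def algebra_simps)
qed

lemma term_eq:
  fixes a x y :: real and n :: int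
  assumes "x = y + 2 * real_of_int n * pi"
  shows "- Bcoef a x * x\<^sup>2 + a * (cos x + 1/2 * x * sin x) = a * cos y"
proof -
  have cy: "cos x = cos y"
    using assms cos_int_2pin[of n] sin_int_2pin[of n] by (simp add: cos_add mult.commute mult.left_commute)
  show ?thesis using cy theta_sin[of x] by (simp add: Bcoef_def algebra_simps)
qed

theorem theorem2:
  fixes M T :: nat
    and A \<phi> \<theta> :: "nat \<Rightarrow> nat \<Rightarrow> nat \<Rightarrow> real"
    and \<nu> :: "nat \<Rightarrow> nat \<Rightarrow> nat \<Rightarrow> int"
    and \<tau> :: "nat \<Rightarrow> real"
  assumes "M \<ge> 2" and "T > 0" and "even T"
    and "\<And>i j k. i \<in> {1..M} \<Longrightarrow> j \<in> {1..M} \<Longrightarrow> k \<in> {0..T div 2} \<Longrightarrow> A i j k \<ge> 0"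
    and "\<And>i j k. i \<in> {1..M} \<Longrightarrow> j \<in> {1..M} \<Longrightarrow> k \<in> {0..T div 2} \<Longrightarrow>
           \<theta> i j k \<in> {-pi..pi}"
    and "\<And>i j k. i \<in> {1..M} \<Longrightarrow> j \<in> {1..M} \<Longrightarrow> k \<in> {0..T div 2} \<Longrightarrow>
           \<bar>omega T k * (\<tau> j - \<tau> i) + \<phi> i j k + 2 * real_of_int (\<nu> i j k) * pi\<bar> \<le> pi"
  shows "Jobj M T A \<phi> \<tau> \<ge> Qaux M T A \<phi> \<nu> \<tau> \<theta> \<and>
      ((\<forall>i\<in>{1..M}. \<forall>j\<in>{1..M}. \<forall>k\<in>{0..T div 2}.
            \<theta> i j k = omega T k * (\<tau> j - \<tau> i) + \<phi> i j k + 2 * real_of_int (\<nu> i j k) * pi)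
         \<longrightarrow> Qaux M T A \<phi> \<nu> \<tau> \<theta> = Jobj M T A \<phi> \<tau>)"
proof
  show "Jobj M T A \<phi> \<tau> \<ge> Qaux M T A \<phi> \<nu> \<tau> \<theta>"
    unfolding Jobj_def Qaux_def
  proof (rule mult_left_mono)
    show "0 \<le> 1 / real T" by simp
    show "(\<Sum>k\<in>{0..T div 2}. \<Sum>i\<in>{1..M}. \<Sum>j\<in>{1..M}.
        - Bcoef (A i j k) (\<theta> i j k) *
            (omega T k * (\<tau> j - \<tau> i) + \<phi> i j k + 2 * real_of_int (\<nu> i j k) * pi)\<^sup>2
        + A i j k * (cos (\<theta> i j k) + 1/2 * \<theta> i j k * sin (\<theta> i j k)))
      \<le> (\<Sum>k\<in>{0..T div 2}. \<Sum>i\<in>{1..M}. \<Sum>j\<in>{1..M}.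
        A i j k * cos (omega T k * (\<tau> j - \<tau> i) + \<phi> i j k))"
    proof (intro sum_mono)
      fix k i j assume h: "k \<in> {0..T div 2}" "i \<in> {1..M}" "j \<in> {1..M}"
      show "- Bcoef (A i j k) (\<theta> i j k) *
            (omega T k * (\<tau> j - \<tau> i) + \<phi> i j k + 2 * real_of_int (\<nu> i j k) * pi)\<^sup>2
        + A i j k * (cos (\<theta> i j k) + 1/2 * \<theta> i j k * sin (\<theta> i j k))
        \<le> A i j k * cos (omega T k * (\<tau> j - \<tau> i) + \<phi> i j k)"
        using assms(4-6)[OF h(2,3,1)]
        by (intro term_le[where n="\<nu> i j k"]) auto
    qed
  qed
next
  show "(\<forall>i\<in>{1..M}. \<forall>j\<in>{1..M}. \<forall>k\<in>{0..T div 2}.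
            \<theta> i j k = omega T k * (\<tau> j - \<tau> i) + \<phi> i j k + 2 * real_of_int (\<nu> i j k) * pi)
         \<longrightarrow> Qaux M T A \<phi> \<nu> \<tau> \<theta> = Jobj M T A \<phi> \<tau>"
  proof
    assume H: "\<forall>i\<in>{1..M}. \<forall>j\<in>{1..M}. \<forall>k\<in>{0..T div 2}.
            \<theta> i j k = omega T k * (\<tau> j - \<tau> i) + \<phi> i j k + 2 * real_of_int (\<nu> i j k) * pi"
    show "Qaux M T A \<phi> \<nu> \<tau> \<theta> = Jobj M T A \<phi> \<tau>"
      unfolding Jobj_def Qaux_def
    proof (intro arg_cong[where f="\<lambda>x. 1 / real T * x"] sum.cong refl)
      fix k i j assume h: "k \<in> {0..T div 2}" "i \<in> {1..M}" "j \<in> {1..M}"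
      have e: "\<theta> i j k = omega T k * (\<tau> j - \<tau> i) + \<phi> i j k + 2 * real_of_int (\<nu> i j k) * pi"
        using H h by blast
      show "- Bcoef (A i j k) (\<theta> i j k) *
            (omega T k * (\<tau> j - \<tau> i) + \<phi> i j k + 2 * real_of_int (\<nu> i j k) * pi)\<^sup>2
        + A i j k * (cos (\<theta> i j k) + 1/2 * \<theta> i j k * sin (\<theta> i j k))
        = A i j k * cos (omega T k * (\<tau> j - \<tau> i) + \<phi> i j k)"
        using term_eq[OF e, of "A i j k"] e by simp
    qed
  qed
qed

end
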